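(* Let $H$ be a finite abelian group with $\operatorname{rank}(H)=s$, and let $(H,\mathcal S,\mathcal W)$ be a tame decomposition configuration. Then there is a positive integer $n$ and a tame decomposition configuration $(G,\mathcal T,\mathcal Z)$ with $G=(\mathbb{Z}/n\mathbb{Z})^s$ that has $(H,\mathcal S,\mathcal W)$ as a quotient. In particular, if $(H,\mathcal S)$ is a tame ramification configuration, then there is a tame ramification configuration $(G,\mathcal T)$ with $G=(\mathbb{Z}/n\mathbb{Z})^s$ for some positive integer $n$ which has $(H,\mathcal S)$ as a quotient.
   Context: For a finite group $G$, $\operatorname{rank}(G)$ is the minimal number of elements of $G$ which together with all their conjugates generate $G$ (for abelian $G$, the minimal number of generators). A (minimal) tame ramification configuration is a pair $(G,\mathcal T)$ with $G$ finite of rank $s$ and $\mathcal T=\{T_1,\dots,T_s\}$ cyclic subgroups of $G$ which together with their conjugates generate $G$. A (minimal) tame decomposition configuration is a triple $(G,\mathcal T,\mathcal Z)$ with $(G,\mathcal T)$ a tame ramification configuration and $\mathcal Z=\{Z_1,\dots,Z_s\}$ subgroups of $G$ with $T_i$ normal in $Z_i$ and $Z_i/T_i$ cyclic. $(H,\mathcal S)$ is a quotient of $(G,\mathcal T)$ if $\operatorname{rank}(H)=\operatorname{rank}(G)$ and there is a surjective homomorphism $\pi:G\to H$ with $\pi(T_i)=S_i$ for all $i$; $(H,\mathcal S,\mathcal W)$ is a quotient of $(G,\mathcal T,\mathcal Z)$ if moreover $\pi(Z_i)=W_i$ for all $i$. *)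

theory Defs
  imports "HOL-Algebra.Algebra"
begin

definition conj_closure :: "('a, 'b) monoid_scheme \<Rightarrow> 'a set \<Rightarrow> 'a set" where
  "conj_closure G A = {monoid.mult G (monoid.mult G g x) (m_inv G g) | g x. g \<in> carrier G \<and> x \<in> A}"

definition grp_rank :: "('a, 'b) monoid_scheme \<Rightarrow> nat" where
  "grp_rank G = (LEAST k. \<exists>A. A \<subseteq> carrier G \<and> finite A \<and> card A = k \<and>
                     generate G (conj_closure G A) = carrier G)"

definition tame_ram_config :: "('a, 'b) monoid_scheme \<Rightarrow> (nat \<Rightarrow> 'a set) \<Rightarrow> bool" where
  "tame_ram_config G T \<longleftrightarrow>
     group G \<and> finite (carrier G) \<and>
     (\<forall>i < grp_rank G. subgroup (T i) G \<and> cyclic_group (subgroup_generated G (T i))) \<and>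
     generate G (conj_closure G (\<Union>i < grp_rank G. T i)) = carrier G"

definition tame_dec_config ::
  "('a, 'b) monoid_scheme \<Rightarrow> (nat \<Rightarrow> 'a set) \<Rightarrow> (nat \<Rightarrow> 'a set) \<Rightarrow> bool" where
  "tame_dec_config G T Z \<longleftrightarrow>
     tame_ram_config G T \<and>
     (\<forall>i < grp_rank G. subgroup (Z i) G \<and> T i \<subseteq> Z i \<and>
        normal (T i) (G\<lparr>carrier := Z i\<rparr>) \<and> cyclic_group ((G\<lparr>carrier := Z i\<rparr>) Mod (T i)))"

definition ram_quotient ::
  "('a, 'b) monoid_scheme \<Rightarrow> (nat \<Rightarrow> 'a set) \<Rightarrow> ('c, 'd) monoid_scheme \<Rightarrow> (nat \<Rightarrow> 'c set) \<Rightarrow> bool" where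
  "ram_quotient G T H S \<longleftrightarrow> grp_rank H = grp_rank G \<and>
     (\<exists>\<pi>. \<pi> \<in> hom G H \<and> \<pi> ` carrier G = carrier H \<and>
          (\<forall>i < grp_rank G. \<pi> ` T i = S i))"

definition dec_quotient ::
  "('a, 'b) monoid_scheme \<Rightarrow> (nat \<Rightarrow> 'a set) \<Rightarrow> (nat \<Rightarrow> 'a set) \<Rightarrow>
   ('c, 'd) monoid_scheme \<Rightarrow> (nat \<Rightarrow> 'c set) \<Rightarrow> (nat \<Rightarrow> 'c set) \<Rightarrow> bool" where
  "dec_quotient G T Z H S W \<longleftrightarrow> grp_rank H = grp_rank G \<and>
     (\<exists>\<pi>. \<pi> \<in> hom G H \<and> \<pi> ` carrier G = carrier H \<and>
          (\<forall>i < grp_rank G. \<pi> ` T i = S i \<and> \<pi> ` Z i = W i))"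

definition Zn_power :: "nat \<Rightarrow> nat \<Rightarrow> (nat \<Rightarrow> int) monoid" where
  "Zn_power n s = product_group {..<s} (\<lambda>_. integer_mod_group n)"

end

theory Submission
  imports Defs
begin

lemma conj_closure_comm:
  fixes G (structure)
  assumes "comm_group G" "A \<subseteq> carrier G"
  shows "conj_closure G A = A"
proof -
  interpret comm_group G by fact
  show ?thesis
  proof
    show "conj_closure G A \<subseteq> A"
    proof
      fix y assume "y \<in> conj_closure G A"
      then obtain g x where y: "y = g \<otimes> x \<otimes> inv g" "g \<in> carrier G" "x \<in> A"
        unfolding conj_closure_def by blast
      then have xc: "x \<in> carrier G" using assms(2) by blast
      have "g \<otimes> x \<otimes> inv g = x \<otimes> (g \<otimes> inv g)"
        using y(2) xc by (metis m_comm m_assoc inv_closed)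
      then show "y \<in> A" using y xc by simp
    qed
    show "A \<subseteq> conj_closure G A"
      unfolding conj_closure_def using assms(2) by force
  qed
qed

lemma (in group) pow_mod_exp:
  assumes "x \<in> carrier G" "x [^] (e::nat) = \<one>"
  shows "x [^] ((k::int) mod int e) = x [^] k"
proof -
  have "x [^] k = x [^] (int e * (k div int e) + k mod int e)" by simp
  also have "\<dots> = x [^] (int e * (k div int e)) \<otimes> x [^] (k mod int e)"
    using assms by (simp only: int_pow_mult)
  also have "\<dots> = (x [^] int e) [^] (k div int e) \<otimes> x [^] (k mod int e)"
    using assms by (simp only: int_pow_pow)
  also have "\<dots> = x [^] (k mod int e)" using assms by (simp add: int_pow_int)
  finally show ?thesis by simp
qed

lemma zpow:
  assumes "x \<in> carrier (product_group I (\<lambda>_. integer_mod_group N))"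
  shows "x [^]\<^bsub>product_group I (\<lambda>_. integer_mod_group N)\<^esub> (m::nat) = (\<lambda>j\<in>I. (int m * x j) mod int N)"
proof (induction m)
  case 0
  then show ?case by auto
next
  case (Suc m)
  show ?case using assms
    by (auto simp: Suc restrict_def fun_eq_iff mod_add_left_eq mod_add_right_eq algebra_simps PiE_iff carrier_integer_mod_group split: if_splits)
qed

lemma zcomm: "comm_group (product_group I (\<lambda>_. integer_mod_group N))"
proof -
  interpret group "product_group I (\<lambda>_. integer_mod_group N)" by simp
  show ?thesis by (rule group_comm_groupI) (auto simp: add.commute)
qed

lemma (in group) nat_pow_mod_exp:
  assumes "x \<in> carrier G" "x [^] (e::nat) = \<one>"
  shows "x [^] (k mod e) = x [^] (k::nat)"
proof -
  have "x [^] k = x [^] (e * (k div e) + k mod e)" by simp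
  also have "\<dots> = x [^] (e * (k div e)) \<otimes> x [^] (k mod e)"
    using assms by (simp only: nat_pow_mult)
  also have "\<dots> = (x [^] e) [^] (k div e) \<otimes> x [^] (k mod e)"
    using assms(1) by (simp only: nat_pow_pow)
  also have "\<dots> = x [^] (k mod e)" using assms by simp
  finally show ?thesis by simp
qed

lemma (in comm_group) card_generate_le:
  assumes A: "finite A" "A \<subseteq> carrier G" and e: "e > 0" and ex: "\<forall>x\<in>carrier G. x [^] (e::nat) = \<one>"
  shows "card (generate G A) \<le> e ^ card A"
proof -
  define F where "F f = finprod G (\<lambda>a. a [^] (f a::nat)) A" for f
  have sub: "generate G A \<subseteq> F ` (A \<rightarrow>\<^sub>E {..<e})"
  proof
    fix h assume "h \<in> generate G A"
    then show "h \<in> F ` (A \<rightarrow>\<^sub>E {..<e})"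
    proof induction
      case one
      have "F (\<lambda>a\<in>A. 0) = \<one>" unfolding F_def
        by (rule finprod_one_eqI) simp
      moreover have "(\<lambda>a\<in>A. 0) \<in> A \<rightarrow>\<^sub>E {..<e}" using e by auto
      ultimately show ?case by (rule image_eqI[OF sym])
    next
      case (incl h)
      have hc: "h \<in> carrier G" using incl A by blast
      have "F (\<lambda>a\<in>A. if a = h then 1 mod e else 0) = finprod G (\<lambda>a. if a = h then a [^] (1 mod e) else \<one>) A"
        unfolding F_def using A by (intro finprod_cong') (auto simp: Pi_iff)
      also have "\<dots> = h [^] (1 mod e)"
        using A incl by (intro finprod_singleton_swap) auto
      also have "\<dots> = h" using nat_pow_mod_exp[of h e 1] hc ex by simp
      finally have "F (\<lambda>a\<in>A. if a = h then 1 mod e else 0) = h" .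
      moreover have "(\<lambda>a\<in>A. if a = h then 1 mod e else 0) \<in> A \<rightarrow>\<^sub>E {..<e}" using e by auto
      ultimately show ?case by (rule image_eqI[OF sym])
    next
      case (inv h)
      have hc: "h \<in> carrier G" using inv A by blast
      have "h [^] (e - 1) \<otimes> h = h [^] e" using e hc
        by (metis Suc_diff_1 nat_pow_Suc)
      then have ih: "inv h = h [^] (e - 1)" using ex hc by (intro inv_equality) auto
      have "F (\<lambda>a\<in>A. if a = h then e - 1 else 0) = finprod G (\<lambda>a. if a = h then a [^] (e - 1) else \<one>) A"
        unfolding F_def using A by (intro finprod_cong') (auto simp: Pi_iff)
      also have "\<dots> = h [^] (e - 1)"
        using A inv by (intro finprod_singleton_swap) auto
      finally have "F (\<lambda>a\<in>A. if a = h then e - 1 else 0) = inv h" using ih by simp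
      moreover have "(\<lambda>a\<in>A. if a = h then e - 1 else 0) \<in> A \<rightarrow>\<^sub>E {..<e}" using e by auto
      ultimately show ?case by (rule image_eqI[OF sym])
    next
      case (eng h1 h2)
      then obtain f1 f2 where f: "f1 \<in> A \<rightarrow>\<^sub>E {..<e}" "h1 = F f1" "f2 \<in> A \<rightarrow>\<^sub>E {..<e}" "h2 = F f2"
        by blast
      have "F (\<lambda>a\<in>A. (f1 a + f2 a) mod e) = finprod G (\<lambda>a. a [^] f1 a \<otimes> a [^] f2 a) A"
        unfolding F_def
      proof (intro finprod_cong')
        fix a assume a: "a \<in> A"
        then have ac: "a \<in> carrier G" using A by blast
        have "a [^] ((f1 a + f2 a) mod e) = a [^] (f1 a + f2 a)"
          using nat_pow_mod_exp[of a e] ac ex by blast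
        then show "a [^] (restrict (\<lambda>a. (f1 a + f2 a) mod e) A a) = a [^] f1 a \<otimes> a [^] f2 a"
          using a ac by (simp add: nat_pow_mult)
      qed (use A in \<open>auto simp: Pi_iff\<close>)
      also have "\<dots> = F f1 \<otimes> F f2" unfolding F_def using A
        by (intro finprod_multf) (auto simp: Pi_iff)
      finally have "F (\<lambda>a\<in>A. (f1 a + f2 a) mod e) = h1 \<otimes> h2" using f by simp
      moreover have "(\<lambda>a\<in>A. (f1 a + f2 a) mod e) \<in> A \<rightarrow>\<^sub>E {..<e}" using e by auto
      ultimately show ?case by (rule image_eqI[OF sym])
    qed
  qed
  have "card (generate G A) \<le> card (F ` (A \<rightarrow>\<^sub>E {..<e}))"
    using sub A by (intro card_mono) (auto simp: finite_PiE)
  also have "\<dots> \<le> card (A \<rightarrow>\<^sub>E {..<e})" using A by (intro card_image_le) (auto simp: finite_PiE)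
  also have "\<dots> = e ^ card A" using A by (simp add: card_PiE)
  finally show ?thesis .
qed

definition ev :: "nat \<Rightarrow> nat \<Rightarrow> nat \<Rightarrow> nat \<Rightarrow> int" where
  "ev N s i = (\<lambda>j\<in>{..<s}. if j = i then 1 mod int N else 0)"

lemma Zn_group: "comm_group (Zn_power N s)"
  unfolding Zn_power_def by (rule zcomm)

lemma Zn_carrier: "N > 0 \<Longrightarrow> carrier (Zn_power N s) = {..<s} \<rightarrow>\<^sub>E {0..<int N}"
  by (simp add: Zn_power_def carrier_integer_mod_group)

lemma ev_carrier: "N > 0 \<Longrightarrow> ev N s i \<in> carrier (Zn_power N s)"
  by (auto simp: Zn_carrier ev_def)

lemma Zn_pow: "x \<in> carrier (Zn_power N s) \<Longrightarrow> x [^]\<^bsub>Zn_power N s\<^esub> (m::nat) = (\<lambda>j\<in>{..<s}. (int m * x j) mod int N)"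
  unfolding Zn_power_def by (rule zpow)

lemma Zn_mult: "x \<otimes>\<^bsub>Zn_power N s\<^esub> y = (\<lambda>j\<in>{..<s}. (x j + y j) mod int N)"
  by (simp add: Zn_power_def)

lemma Zn_one: "\<one>\<^bsub>Zn_power N s\<^esub> = (\<lambda>j\<in>{..<s}. 0)"
  by (simp add: Zn_power_def)

lemma ev_pow: "N > 0 \<Longrightarrow> ev N s i [^]\<^bsub>Zn_power N s\<^esub> (m::nat) = (\<lambda>j\<in>{..<s}. if j = i then int m mod int N else 0)"
  by (simp add: Zn_pow ev_carrier) (auto simp: ev_def fun_eq_iff mod_mult_right_eq)

lemma ev_ipow: "N > 0 \<Longrightarrow> k \<ge> 0 \<Longrightarrow> ev N s i [^]\<^bsub>Zn_power N s\<^esub> (k::int) = (\<lambda>j\<in>{..<s}. if j = i then k mod int N else 0)"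
proof -
  assume N: "N > 0" and k: "k \<ge> 0"
  have kk: "int (nat k) = k" using k by simp
  have "ev N s i [^]\<^bsub>Zn_power N s\<^esub> k = ev N s i [^]\<^bsub>Zn_power N s\<^esub> (nat k)"
    using int_pow_int[of "Zn_power N s" "ev N s i" "nat k"] unfolding kk .
  also have "\<dots> = (\<lambda>j\<in>{..<s}. if j = i then int (nat k) mod int N else 0)"
    by (rule ev_pow[OF N])
  finally show ?thesis unfolding kk .
qed

lemma Zn_gen:
  assumes N: "N > 0" and x: "x \<in> carrier (Zn_power N s)"
  shows "x \<in> generate (Zn_power N s) (ev N s ` {..<s})"
proof -
  let ?G = "Zn_power N s"
  interpret comm_group ?G by (rule Zn_group)
  have evs0: "ev N s ` {..<s} \<subseteq> carrier ?G" using ev_carrier[OF N] by auto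
  have xr: "\<forall>j<s. 0 \<le> x j \<and> x j < int N" and xe: "x \<in> extensional {..<s}"
    using x N by (auto simp: Zn_carrier PiE_iff)
  have "J \<subseteq> {..<s} \<Longrightarrow> (\<lambda>j\<in>{..<s}. if j \<in> J then x j else 0) \<in> generate ?G (ev N s ` {..<s})"
    if "finite J" for J
    using that
  proof (induction J rule: finite_induct)
    case empty
    have e: "(\<lambda>j\<in>{..<s}. if j \<in> {} then x j else 0) = \<one>\<^bsub>?G\<^esub>" by (simp add: Zn_one)
    show ?case unfolding e by (rule generate.one)
  next
    case (insert i J)
    have i: "i < s" using insert by auto
    have 1: "(\<lambda>j\<in>{..<s}. if j \<in> J then x j else 0) \<in> generate ?G (ev N s ` {..<s})"
      using insert.IH insert.prems by (meson insert_subset)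
    have "ev N s i \<in> generate ?G (ev N s ` {..<s})" using i by (intro generate.incl) auto
    then have 2: "ev N s i [^]\<^bsub>?G\<^esub> (x i) \<in> generate ?G (ev N s ` {..<s})"
      by (rule subgroup_int_pow_closed[OF generate_is_subgroup[OF evs0]])
    have eq: "(\<lambda>j\<in>{..<s}. if j \<in> J then x j else 0) \<otimes>\<^bsub>?G\<^esub> ev N s i [^]\<^bsub>?G\<^esub> (x i)
        = (\<lambda>j\<in>{..<s}. if j \<in> insert i J then x j else 0)"
    proof (rule ext)
      fix j
      show "((\<lambda>j\<in>{..<s}. if j \<in> J then x j else 0) \<otimes>\<^bsub>?G\<^esub> ev N s i [^]\<^bsub>?G\<^esub> (x i)) j
         = (\<lambda>j\<in>{..<s}. if j \<in> insert i J then x j else 0) j"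
      proof (cases "j < s")
        case True
        have xj: "0 \<le> x j" "x j < int N" using xr True by auto
        have xi: "0 \<le> x i" "x i < int N" using xr i by auto
        show ?thesis
          using True xj xi insert.hyps(2) N by (simp add: Zn_mult ev_ipow)
      qed (simp add: Zn_mult)
    qed
    show ?case using generate.eng[OF 1 2] unfolding eq .
  qed
  from this[of "{..<s}"] have "(\<lambda>j\<in>{..<s}. if j \<in> {..<s} then x j else 0) \<in> generate ?G (ev N s ` {..<s})"
    by simp
  moreover have "(\<lambda>j\<in>{..<s}. if j \<in> {..<s} then x j else 0) = x"
    using xe by (auto simp: fun_eq_iff extensional_def)
  ultimately show ?thesis by simp
qed

lemma Zn_card: "N > 0 \<Longrightarrow> card (carrier (Zn_power N s)) = N ^ s"
  by (simp add: Zn_carrier card_PiE)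

lemma Zn_exp: "N > 0 \<Longrightarrow> x \<in> carrier (Zn_power N s) \<Longrightarrow> x [^]\<^bsub>Zn_power N s\<^esub> N = \<one>\<^bsub>Zn_power N s\<^esub>"
  by (simp add: Zn_pow Zn_one)

lemma Zn_rank:
  assumes N: "N > 0" and s: "N \<ge> 2 \<or> s = 0"
  shows "grp_rank (Zn_power N s) = s"
proof -
  let ?G = "Zn_power N s"
  interpret comm_group ?G by (rule Zn_group)
  have evs: "ev N s ` {..<s} \<subseteq> carrier ?G" using ev_carrier[OF N] by auto
  have inj: "inj_on (ev N s) {..<s}"
  proof (cases "s = 0")
    case False
    then have "N \<ge> 2" using s by auto
    show ?thesis
    proof (rule inj_onI)
      fix a b assume ab: "a \<in> {..<s}" "b \<in> {..<s}" "ev N s a = ev N s b"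
      then have "ev N s a a = ev N s b a" by simp
      then show "a = b" using ab(1) \<open>N \<ge> 2\<close> by (simp add: ev_def split: if_splits)
    qed
  qed simp
  have cc: "conj_closure ?G (ev N s ` {..<s}) = ev N s ` {..<s}"
    by (rule conj_closure_comm[OF Zn_group evs])
  have gen: "generate ?G (conj_closure ?G (ev N s ` {..<s})) = carrier ?G"
    unfolding cc
  proof (rule equalityI)
    show "generate ?G (ev N s ` {..<s}) \<subseteq> carrier ?G"
      using generate_in_carrier[OF evs] by blast
    show "carrier ?G \<subseteq> generate ?G (ev N s ` {..<s})"
      using Zn_gen[OF N] by blast
  qed
  have lb: "s \<le> card A" if A: "A \<subseteq> carrier ?G" "finite A" "generate ?G (conj_closure ?G A) = carrier ?G" for A
  proof (cases "s = 0")
    case False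
    then have N2: "N \<ge> 2" using s by auto
    have cA: "conj_closure ?G A = A" by (rule conj_closure_comm[OF Zn_group A(1)])
    have "N ^ s = card (carrier ?G)" using Zn_card[OF N] by simp
    also have "\<dots> = card (generate ?G A)" using A(3) unfolding cA by simp
    also have "\<dots> \<le> N ^ card A"
      using card_generate_le[OF A(2) A(1) N] Zn_exp[OF N] by blast
    finally have "N ^ s \<le> N ^ card A" .
    then show ?thesis using N2 power_le_imp_le_exp[of N s "card A"] by linarith
  qed simp
  have ex: "\<exists>A. A \<subseteq> carrier ?G \<and> finite A \<and> card A = s \<and> generate ?G (conj_closure ?G A) = carrier ?G"
  proof (intro exI conjI)
    show "ev N s ` {..<s} \<subseteq> carrier ?G" by (rule evs)
    show "finite (ev N s ` {..<s})" by simp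
    show "card (ev N s ` {..<s}) = s" using card_image[OF inj] by simp
  qed (rule gen)
  show ?thesis
    unfolding grp_rank_def
    by (rule Least_equality) (use ex lb in blast)+
qed

lemma (in group) cyc_quot:
  assumes nT: "T \<lhd> G" and w: "w \<in> carrier G"
    and cG: "carrier G = {t \<otimes> w [^] (k::int) | t k. t \<in> T}"
  shows "cyclic_group (G Mod T)"
proof -
  interpret normal T G by (rule nT)
  interpret Q: group "G Mod T" by (rule factorgroup_is_group)
  have hom: "(\<lambda>a. T #> a) \<in> hom G (G Mod T)" by (rule r_coset_hom_Mod)
  have pw: "(T #> w) [^]\<^bsub>G Mod T\<^esub> k = T #> (w [^] k)" for k::int
    using hom_int_pow[OF hom w is_group Q.is_group] by simp
  have Tc: "T \<subseteq> carrier G" by (rule subset)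
  show ?thesis
    unfolding Q.cyclic_group
  proof (rule bexI[of _ "T #> w"])
    show "T #> w \<in> carrier (G Mod T)" using w by (simp add: carrier_FactGroup)
    show "carrier (G Mod T) = range (\<lambda>k::int. (T #> w) [^]\<^bsub>G Mod T\<^esub> k)"
    proof (rule equalityI; rule subsetI)
      fix Y assume "Y \<in> carrier (G Mod T)"
      then obtain x where x: "x \<in> carrier G" "Y = T #> x" by (auto simp: carrier_FactGroup)
      have "x \<in> {t \<otimes> w [^] (k::int) | t k. t \<in> T}" using x(1) cG by simp
      then obtain t k where tk: "t \<in> T" "x = t \<otimes> w [^] (k::int)" by blast
      have tc: "t \<in> carrier G" using tk Tc by blast
      have "Y = (T #> t) #> w [^] k" using x tk tc w Tc by (simp add: coset_mult_assoc)
      also have "\<dots> = T #> w [^] k" using coset_join2[OF tc is_subgroup tk(1)] by simp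
      finally show "Y \<in> range (\<lambda>k::int. (T #> w) [^]\<^bsub>G Mod T\<^esub> k)" using pw by auto
    next
      fix Y assume "Y \<in> range (\<lambda>k::int. (T #> w) [^]\<^bsub>G Mod T\<^esub> k)"
      then obtain k::int where "Y = (T #> w) [^]\<^bsub>G Mod T\<^esub> k" by blast
      then have "Y = T #> w [^] k" using pw by simp
      then show "Y \<in> carrier (G Mod T)" using w by (simp add: carrier_FactGroup)
    qed
  qed
qed

lemma (in group) cyc_quot_inv:
  assumes nT: "T \<lhd> G" and cy: "cyclic_group (G Mod T)"
  shows "\<exists>w\<in>carrier G. carrier G = {t \<otimes> w [^] (k::int) | t k. t \<in> T}"
proof -
  interpret normal T G by (rule nT)
  interpret Q: group "G Mod T" by (rule factorgroup_is_group)
  have hom: "(\<lambda>a. T #> a) \<in> hom G (G Mod T)" by (rule r_coset_hom_Mod)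
  have Tc: "T \<subseteq> carrier G" by (rule subset)
  have "\<exists>c\<in>carrier (G Mod T). carrier (G Mod T) = range (\<lambda>k::int. c [^]\<^bsub>G Mod T\<^esub> k)"
    using cy by (simp only: Q.cyclic_group)
  then obtain c where c: "c \<in> carrier (G Mod T)" "carrier (G Mod T) = range (\<lambda>k::int. c [^]\<^bsub>G Mod T\<^esub> k)"
    by (rule bexE)
  then obtain w where w: "w \<in> carrier G" "c = T #> w" using c(1) unfolding carrier_FactGroup by blast
  have pw: "c [^]\<^bsub>G Mod T\<^esub> k = T #> (w [^] k)" for k::int
    using hom_int_pow[OF hom w(1) is_group Q.is_group] w(2) by simp
  show ?thesis
  proof (rule bexI[OF _ w(1)]; rule equalityI; rule subsetI)
    fix x assume x: "x \<in> carrier G"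
    then have "T #> x \<in> carrier (G Mod T)" unfolding carrier_FactGroup by (rule imageI)
    then have "T #> x \<in> range (\<lambda>k::int. c [^]\<^bsub>G Mod T\<^esub> k)" using c(2) by simp
    then obtain k::int where "T #> x = c [^]\<^bsub>G Mod T\<^esub> k" by blast
    then have "T #> x = T #> (w [^] k)" using pw by simp
    then have "x \<in> T #> (w [^] k)" using rcos_self[OF x is_subgroup] by simp
    then obtain t where "t \<in> T" "x = t \<otimes> w [^] k" unfolding r_coset_def by blast
    then show "x \<in> {t \<otimes> w [^] (k::int) | t k. t \<in> T}" by blast
  next
    fix x assume "x \<in> {t \<otimes> w [^] (k::int) | t k. t \<in> T}"
    then obtain t and k::int where "t \<in> T" "x = t \<otimes> w [^] k" by blast
    then show "x \<in> carrier G" using Tc w(1) by blast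
  qed
qed

lemma (in comm_group) Zsub:
  assumes T: "subgroup T G" and y: "y \<in> carrier G"
  shows "subgroup {t \<otimes> y [^] (k::int) | t k. t \<in> T} G"
proof (rule subgroupI)
  have Tc: "T \<subseteq> carrier G" using T by (rule subgroup.subset)
  show "{t \<otimes> y [^] (k::int) | t k. t \<in> T} \<subseteq> carrier G"
  proof
    fix a assume "a \<in> {t \<otimes> y [^] (k::int) | t k. t \<in> T}"
    then obtain t k where "t \<in> T" "a = t \<otimes> y [^] (k::int)" by blast
    then show "a \<in> carrier G" using Tc y by blast
  qed
  have "\<one> \<otimes> y [^] (0::int) \<in> {t \<otimes> y [^] (k::int) | t k. t \<in> T}" using subgroup.one_closed[OF T] by blast
  then show "{t \<otimes> y [^] (k::int) | t k. t \<in> T} \<noteq> {}" by blast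
  fix a assume "a \<in> {t \<otimes> y [^] (k::int) | t k. t \<in> T}"
  then obtain t k where tk: "t \<in> T" "a = t \<otimes> y [^] (k::int)" by blast
  have tc: "t \<in> carrier G" using tk Tc by blast
  have "inv a = inv t \<otimes> y [^] (- k)" using tk tc y by (simp add: inv_mult int_pow_neg)
  moreover have "inv t \<in> T" using T tk by (simp add: subgroup.m_inv_closed)
  ultimately show "inv a \<in> {t \<otimes> y [^] (k::int) | t k. t \<in> T}" by blast
  fix b assume "b \<in> {t \<otimes> y [^] (k::int) | t k. t \<in> T}"
  then obtain t2 k2 where tk2: "t2 \<in> T" "b = t2 \<otimes> y [^] (k2::int)" by blast
  have tc2: "t2 \<in> carrier G" using tk2 Tc by blast
  have "a \<otimes> b = (t \<otimes> t2) \<otimes> (y [^] k \<otimes> y [^] k2)" 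
  proof -
    have c1: "y [^] k \<in> carrier G" "y [^] k2 \<in> carrier G" using y by auto
    have "a \<otimes> b = t \<otimes> (y [^] k \<otimes> (t2 \<otimes> y [^] k2))" using tk tk2 tc tc2 c1 by (simp add: m_assoc)
    also have "\<dots> = t \<otimes> (t2 \<otimes> (y [^] k \<otimes> y [^] k2))" using tc2 c1 by (simp add: m_lcomm)
    also have "\<dots> = (t \<otimes> t2) \<otimes> (y [^] k \<otimes> y [^] k2)" using tc tc2 c1 by (simp add: m_assoc)
    finally show ?thesis .
  qed
  also have "\<dots> = (t \<otimes> t2) \<otimes> y [^] (k + k2)" using y by (simp add: int_pow_mult)
  finally have "a \<otimes> b = (t \<otimes> t2) \<otimes> y [^] (k + k2)" .
  moreover have "t \<otimes> t2 \<in> T" using T tk tk2 by (simp add: subgroup.m_closed)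
  ultimately show "a \<otimes> b \<in> {t \<otimes> y [^] (k::int) | t k. t \<in> T}" by blast
qed

lemma main_dec:
  fixes H :: "('a, 'b) monoid_scheme" (structure) and S W :: "nat \<Rightarrow> 'a set" and s :: nat
  assumes cH: "comm_group H" and fH: "finite (carrier H)" and rH: "grp_rank H = s"
    and dc: "tame_dec_config H S W"
  shows "\<exists>n>0. \<exists>T Z. tame_dec_config (Zn_power n s) T Z \<and> dec_quotient (Zn_power n s) T Z H S W"
proof -
  interpret comm_group H by (rule cH)
  define N where "N = card (carrier H)"
  have N0: "N > 0" unfolding N_def using fH one_closed card_gt_0_iff by blast
  have Si: "subgroup (S i) H" "cyclic_group (subgroup_generated H (S i))" if "i < s" for i
    using dc that rH unfolding tame_dec_config_def tame_ram_config_def by auto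
  have genS: "generate H (conj_closure H (\<Union>i<s. S i)) = carrier H"
    using dc rH unfolding tame_dec_config_def tame_ram_config_def by auto
  have Wi: "subgroup (W i) H" "S i \<subseteq> W i" "normal (S i) (H\<lparr>carrier := W i\<rparr>)"
      "cyclic_group ((H\<lparr>carrier := W i\<rparr>) Mod (S i))" if "i < s" for i
    using dc that rH unfolding tame_dec_config_def by auto
  have N2: "N \<ge> 2 \<or> s = 0"
  proof (rule ccontr)
    assume "\<not> (N \<ge> 2 \<or> s = 0)"
    then have "N = 1" "s \<noteq> 0" using N0 by auto
    then have "carrier H = {\<one>}" using N_def one_closed by (metis card_1_singletonE singletonD)
    then have "generate H (conj_closure H {}) = carrier H"
      by (simp add: conj_closure_def generate_empty)
    then have "grp_rank H = 0" unfolding grp_rank_def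
      by (intro Least_eq_0) (rule exI[of _ "{}"], simp)
    then show False using rH \<open>s \<noteq> 0\<close> by simp
  qed
  have expH: "x [^] N = \<one>" if "x \<in> carrier H" for x
    using pow_order_eq_1[OF that] unfolding order_def N_def .
  have "\<forall>i. \<exists>g. i < s \<longrightarrow> g \<in> S i \<and> S i = generate H {g}"
  proof (intro allI impI)
    fix i
    show "\<exists>g. i < s \<longrightarrow> g \<in> S i \<and> S i = generate H {g}"
    proof (cases "i < s")
      case True
      let ?K = "subgroup_generated H (S i)"
      have cK: "carrier ?K = S i" using Si(1)[OF True] by (rule subgroup.carrier_subgroup_generated_subgroup)
      interpret K: group ?K by simp
      have "\<exists>x\<in>carrier ?K. carrier ?K = range (\<lambda>k::int. x [^]\<^bsub>?K\<^esub> k)"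
        using Si(2)[OF True] by (simp only: K.cyclic_group)
      then obtain x where x: "x \<in> carrier ?K" "carrier ?K = range (\<lambda>k::int. x [^]\<^bsub>?K\<^esub> k)"
        by (rule bexE)
      have xS: "x \<in> S i" using x(1) unfolding cK .
      have xc: "x \<in> carrier H" by (rule subgroup.mem_carrier[OF Si(1)[OF True] xS])
      have "S i = carrier ?K" by (rule cK[symmetric])
      also have "\<dots> = range (\<lambda>k::int. x [^]\<^bsub>?K\<^esub> k)" by (rule x(2))
      also have "\<dots> = range (\<lambda>k::int. x [^] k)" by (simp only: int_pow_subgroup_generated[OF x(1)])
      also have "\<dots> = generate H {x}" unfolding generate_pow[OF xc] by blast
      finally have eqx: "S i = generate H {x}" .
      show ?thesis by (rule exI[of _ x]) (use xS eqx in blast)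
    qed simp
  qed
  from choice[OF this] obtain g where g0: "\<forall>i. i < s \<longrightarrow> g i \<in> S i \<and> S i = generate H {g i}"
    by (rule exE)
  have g: "g i \<in> S i \<and> S i = generate H {g i}" if "i < s" for i
    using spec[OF g0, of i] that by (rule mp)
  have gc: "g i \<in> carrier H" if "i < s" for i
    by (rule subgroup.mem_carrier[OF Si(1)[OF that] conjunct1[OF g[OF that]]])
  have "\<forall>i. \<exists>w. i < s \<longrightarrow> w \<in> W i \<and> W i = {t \<otimes> w [^] (k::int) | t k. t \<in> S i}"
  proof (intro allI impI)
    fix i
    show "\<exists>w. i < s \<longrightarrow> w \<in> W i \<and> W i = {t \<otimes> w [^] (k::int) | t k. t \<in> S i}"
    proof (cases "i < s")
      case True
      let ?K = "H\<lparr>carrier := W i\<rparr>"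
      have gK: "group ?K" using subgroup_imp_group[OF Wi(1)[OF True]] .
      have "\<exists>w\<in>carrier ?K. carrier ?K = {t \<otimes>\<^bsub>?K\<^esub> w [^]\<^bsub>?K\<^esub> (k::int) | t k. t \<in> S i}"
        by (rule group.cyc_quot_inv[OF gK Wi(3)[OF True] Wi(4)[OF True]])
      then obtain w where w: "w \<in> carrier ?K" "carrier ?K = {t \<otimes>\<^bsub>?K\<^esub> w [^]\<^bsub>?K\<^esub> (k::int) | t k. t \<in> S i}"
        by (rule bexE)
      have cKW: "carrier ?K = W i" by simp
      have mK: "t \<otimes>\<^bsub>?K\<^esub> u = t \<otimes> u" for t u by simp
      have wW: "w \<in> W i" using w(1) unfolding cKW .
      have pw: "w [^]\<^bsub>?K\<^esub> (k::int) = w [^] k" for k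
        using int_pow_consistent[OF Wi(1)[OF True] wW] by simp
      have "W i = {t \<otimes>\<^bsub>?K\<^esub> w [^]\<^bsub>?K\<^esub> (k::int) | t k. t \<in> S i}"
        using w(2) unfolding cKW .
      also have "\<dots> = {t \<otimes> w [^] (k::int) | t k. t \<in> S i}" by (simp only: mK pw)
      finally have eqW: "W i = {t \<otimes> w [^] (k::int) | t k. t \<in> S i}" .
      show ?thesis by (intro exI[of _ w] impI conjI wW eqW)
    qed simp
  qed
  from choice[OF this] obtain w where w0: "\<forall>i. i < s \<longrightarrow> w i \<in> W i \<and> W i = {t \<otimes> w i [^] (k::int) | t k. t \<in> S i}"
    by (rule exE)
  have w: "w i \<in> W i \<and> W i = {t \<otimes> w i [^] (k::int) | t k. t \<in> S i}" if "i < s" for i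
    using spec[OF w0, of i] that by (rule mp)
  have wc: "w i \<in> carrier H" if "i < s" for i
    by (rule subgroup.mem_carrier[OF Wi(1)[OF that] conjunct1[OF w[OF that]]])
  let ?G = "Zn_power N s"
  interpret Gc: comm_group ?G by (rule Zn_group)
  define \<pi> where "\<pi> x = finprod H (\<lambda>j. g j [^] (x j :: int)) {..<s}" for x :: "nat \<Rightarrow> int"
  have gpow: "g j [^] (k mod int N) = g j [^] k" if "j < s" for j k
    by (rule pow_mod_exp[OF gc[OF that] expH[OF gc[OF that]]])
  have gPi: "(\<lambda>j. g j [^] (f j :: int)) \<in> {..<s} \<rightarrow> carrier H" for f
    unfolding Pi_def using gc by simp
  have \<pi>c: "\<pi> x \<in> carrier H" for x
    unfolding \<pi>_def by (rule finprod_closed[OF gPi])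
  have \<pi>m: "\<pi> (x \<otimes>\<^bsub>?G\<^esub> y) = \<pi> x \<otimes> \<pi> y" for x y
  proof -
    have "\<pi> (x \<otimes>\<^bsub>?G\<^esub> y) = finprod H (\<lambda>j. g j [^] x j \<otimes> g j [^] y j) {..<s}"
      unfolding \<pi>_def
    proof (rule finprod_cong')
      show "(\<lambda>j. g j [^] x j \<otimes> g j [^] y j) \<in> {..<s} \<rightarrow> carrier H"
        unfolding Pi_def using gc by simp
      fix j assume j: "j \<in> {..<s}"
      then have "(x \<otimes>\<^bsub>?G\<^esub> y) j = (x j + y j) mod int N" by (simp add: Zn_mult)
      then show "g j [^] (x \<otimes>\<^bsub>?G\<^esub> y) j = g j [^] x j \<otimes> g j [^] y j"
        using j gpow gc by (simp add: int_pow_mult)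
    qed simp
    also have "\<dots> = \<pi> x \<otimes> \<pi> y"
      unfolding \<pi>_def by (rule finprod_multf[OF gPi gPi])
    finally show ?thesis .
  qed
  have hom: "\<pi> \<in> hom ?G H"
    unfolding hom_def using \<pi>c \<pi>m by simp
  have gh: "group_hom ?G H \<pi>"
    unfolding group_hom_def group_hom_axioms_def using Gc.is_group is_group hom by simp
  have evc: "ev N s i \<in> carrier ?G" for i by (rule ev_carrier[OF N0])
  have \<pi>e: "\<pi> (ev N s i) = g i" if "i < s" for i
  proof -
    have "\<pi> (ev N s i) = finprod H (\<lambda>j. if j = i then g j else \<one>) {..<s}"
      unfolding \<pi>_def
    proof (rule finprod_cong')
      show "(\<lambda>j. if j = i then g j else \<one>) \<in> {..<s} \<rightarrow> carrier H"
        unfolding Pi_def using gc by simp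
      fix j assume j: "j \<in> {..<s}"
      show "g j [^] ev N s i j = (if j = i then g j else \<one>)"
        using j gpow[of j 1] gc[of j] by (cases "j = i") (simp_all add: ev_def)
    qed simp
    also have "\<dots> = g i"
      using that gc by (intro finprod_singleton_swap) (auto simp: Pi_def)
    finally show ?thesis .
  qed
  define T where "T i = generate ?G {ev N s i}" for i
  have evs: "{ev N s i} \<subseteq> carrier ?G" for i using evc by simp
  have Tpow: "T i = {ev N s i [^]\<^bsub>?G\<^esub> (k::int) | k. k \<in> UNIV}" for i
    unfolding T_def by (rule Gc.generate_pow[OF evc])
  have Tsub: "subgroup (T i) ?G" for i
    unfolding T_def by (rule Gc.generate_is_subgroup[OF evs])
  have Tc: "T i \<subseteq> carrier ?G" for i by (rule subgroup.subset[OF Tsub])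
  have evT: "ev N s i \<in> T i" for i unfolding T_def by (rule generate.incl) simp
  have \<pi>T: "\<pi> ` T i = S i" if "i < s" for i
  proof -
    have hp: "\<pi> (ev N s i [^]\<^bsub>?G\<^esub> (k::int)) = g i [^] k" for k
      using group_hom.hom_int_pow[OF gh evc] \<pi>e[OF that] by simp
    have Tr: "T i = range (\<lambda>k::int. ev N s i [^]\<^bsub>?G\<^esub> k)" unfolding Tpow by auto
    have "\<pi> ` T i = range (\<lambda>k::int. g i [^] k)"
      unfolding Tr image_image hp ..
    also have "\<dots> = generate H {g i}" unfolding generate_pow[OF gc[OF that]] by auto
    also have "\<dots> = S i" using g[OF that] by simp
    finally show ?thesis .
  qed
  have Tcyc: "cyclic_group (subgroup_generated ?G (T i))" for i
  proof -
    have gg: "generate ?G (T i) = T i"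
    proof (rule equalityI)
      show "generate ?G (T i) \<subseteq> T i" by (rule Gc.generate_subgroup_incl[OF subset_refl Tsub])
      show "T i \<subseteq> generate ?G (T i)" by (rule subsetI, rule generate.incl)
    qed
    have "subgroup_generated ?G (T i) = subgroup_generated ?G {ev N s i}"
      unfolding subgroup_generated_def
      using Tc[of i] evc[of i] gg by (simp add: Int_absorb1 T_def)
    then show ?thesis using Gc.cyclic_group_generated by simp
  qed
  have Sc: "(\<Union>i<s. S i) \<subseteq> carrier H"
    using subgroup.subset[OF Si(1)] by blast
  have surj: "\<pi> ` carrier ?G = carrier H"
  proof (rule equalityI)
    show "\<pi> ` carrier ?G \<subseteq> carrier H" using \<pi>c by blast
    have "(\<Union>i<s. S i) \<subseteq> \<pi> ` carrier ?G"
    proof (rule UN_least)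
      fix i assume "i \<in> {..<s}"
      then have "S i = \<pi> ` T i" using \<pi>T by simp
      also have "\<dots> \<subseteq> \<pi> ` carrier ?G" by (rule image_mono[OF Tc])
      finally show "S i \<subseteq> \<pi> ` carrier ?G" .
    qed
    then have "generate H (\<Union>i<s. S i) \<subseteq> \<pi> ` carrier ?G"
      by (rule generate_subgroup_incl[OF _ group_hom.img_is_subgroup[OF gh]])
    then show "carrier H \<subseteq> \<pi> ` carrier ?G"
      using genS conj_closure_comm[OF cH Sc] by simp
  qed
  have "\<forall>i. \<exists>y. i < s \<longrightarrow> y \<in> carrier ?G \<and> \<pi> y = w i"
  proof (intro allI impI)
    fix i
    show "\<exists>y. i < s \<longrightarrow> y \<in> carrier ?G \<and> \<pi> y = w i"
    proof (cases "i < s")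
      case True
      then have "w i \<in> \<pi> ` carrier ?G" using wc[OF True] surj by simp
      then obtain y where "y \<in> carrier ?G" "\<pi> y = w i" by (rule imageE) simp
      then show ?thesis by blast
    qed simp
  qed
  from choice[OF this] obtain y where y0: "\<forall>i. i < s \<longrightarrow> y i \<in> carrier ?G \<and> \<pi> (y i) = w i"
    by (rule exE)
  have yc: "y i \<in> carrier ?G" and \<pi>y: "\<pi> (y i) = w i" if "i < s" for i
    using spec[OF y0, of i] that by simp_all
  define Z where "Z i = {t \<otimes>\<^bsub>?G\<^esub> y i [^]\<^bsub>?G\<^esub> (k::int) | t k. t \<in> T i}" for i
  have Zsub: "subgroup (Z i) ?G" if "i < s" for i
    unfolding Z_def by (rule Gc.Zsub[OF Tsub yc[OF that]])
  have TZ: "T i \<subseteq> Z i" if "i < s" for i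
  proof
    fix t assume t: "t \<in> T i"
    then have "t = t \<otimes>\<^bsub>?G\<^esub> y i [^]\<^bsub>?G\<^esub> (0::int)" using Tc[of i] by auto
    then show "t \<in> Z i" unfolding Z_def using t by blast
  qed
  have yZ: "y i \<in> Z i" if "i < s" for i
  proof -
    have "y i = \<one>\<^bsub>?G\<^esub> \<otimes>\<^bsub>?G\<^esub> y i [^]\<^bsub>?G\<^esub> (1::int)" using yc[OF that] by simp
    moreover have "\<one>\<^bsub>?G\<^esub> \<in> T i" by (rule subgroup.one_closed[OF Tsub])
    ultimately show ?thesis unfolding Z_def by blast
  qed
  have \<pi>Z: "\<pi> ` Z i = W i" if i: "i < s" for i
  proof -
    have hp: "\<pi> (t \<otimes>\<^bsub>?G\<^esub> y i [^]\<^bsub>?G\<^esub> (k::int)) = \<pi> t \<otimes> w i [^] k" if "t \<in> T i" for t k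
    proof -
      have tc: "t \<in> carrier ?G" using that Tc by blast
      have "\<pi> (t \<otimes>\<^bsub>?G\<^esub> y i [^]\<^bsub>?G\<^esub> k) = \<pi> t \<otimes> \<pi> (y i [^]\<^bsub>?G\<^esub> k)" by (rule \<pi>m)
      also have "\<pi> (y i [^]\<^bsub>?G\<^esub> k) = \<pi> (y i) [^] k"
        by (rule group_hom.hom_int_pow[OF gh yc[OF i]])
      finally show ?thesis using \<pi>y[OF i] by simp
    qed
    show ?thesis
    proof (rule equalityI; rule subsetI)
      fix x assume "x \<in> \<pi> ` Z i"
      then obtain z where z: "z \<in> Z i" "x = \<pi> z" by (rule imageE) simp
      then obtain t and k::int where tk: "t \<in> T i" "z = t \<otimes>\<^bsub>?G\<^esub> y i [^]\<^bsub>?G\<^esub> k"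
        unfolding Z_def by blast
      have "x = \<pi> t \<otimes> w i [^] k" using z tk hp by simp
      moreover have "\<pi> t \<in> S i" using \<pi>T[OF i] tk(1) by blast
      ultimately have "x \<in> {t \<otimes> w i [^] (k::int) | t k. t \<in> S i}" by blast
      then show "x \<in> W i" using w[OF i] by simp
    next
      fix x assume "x \<in> W i"
      then have "x \<in> {t \<otimes> w i [^] (k::int) | t k. t \<in> S i}" using w[OF i] by simp
      then obtain u and k::int where uk: "u \<in> S i" "x = u \<otimes> w i [^] k" by blast
      then have "u \<in> \<pi> ` T i" using \<pi>T[OF i] by simp
      then obtain t where t: "t \<in> T i" "u = \<pi> t" by (rule imageE) simp
      have "x = \<pi> (t \<otimes>\<^bsub>?G\<^esub> y i [^]\<^bsub>?G\<^esub> k)" using uk t hp by simp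
      moreover have "t \<otimes>\<^bsub>?G\<^esub> y i [^]\<^bsub>?G\<^esub> k \<in> Z i" unfolding Z_def using t(1) by blast
      ultimately show "x \<in> \<pi> ` Z i" by (rule image_eqI)
    qed
  qed
  have Zq: "normal (T i) (?G\<lparr>carrier := Z i\<rparr>) \<and> cyclic_group ((?G\<lparr>carrier := Z i\<rparr>) Mod (T i))"
    if i: "i < s" for i
  proof -
    let ?K = "?G\<lparr>carrier := Z i\<rparr>"
    have gK: "group ?K" by (rule Gc.subgroup_imp_group[OF Zsub[OF i]])
    have ZcG: "Z i \<subseteq> carrier ?G" by (rule subgroup.subset[OF Zsub[OF i]])
    have cK: "comm_group ?K"
    proof (rule group.group_comm_groupI[OF gK])
      fix a b assume "a \<in> carrier ?K" "b \<in> carrier ?K"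
      then have "a \<in> carrier ?G" "b \<in> carrier ?G" using ZcG by auto
      then show "a \<otimes>\<^bsub>?K\<^esub> b = b \<otimes>\<^bsub>?K\<^esub> a" using Gc.m_comm by simp
    qed
    have TK: "subgroup (T i) ?K" by (rule Gc.subgroup_incl[OF Tsub Zsub[OF i] TZ[OF i]])
    have nT: "normal (T i) ?K" by (rule comm_group.subgroup_imp_normal[OF cK TK])
    have yK: "y i \<in> carrier ?K" using yZ[OF i] by simp
    have pK: "y i [^]\<^bsub>?K\<^esub> (k::int) = y i [^]\<^bsub>?G\<^esub> k" for k
      using Gc.int_pow_consistent[OF Zsub[OF i] yZ[OF i]] by simp
    have mK: "a \<otimes>\<^bsub>?K\<^esub> b = a \<otimes>\<^bsub>?G\<^esub> b" for a b by simp
    have "carrier ?K = Z i" by simp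
    also have "\<dots> = {t \<otimes>\<^bsub>?G\<^esub> y i [^]\<^bsub>?G\<^esub> (k::int) | t k. t \<in> T i}"
      by (rule Z_def)
    also have "\<dots> = {t \<otimes>\<^bsub>?K\<^esub> y i [^]\<^bsub>?K\<^esub> (k::int) | t k. t \<in> T i}"
      by (simp only: mK pK)
    finally have "carrier ?K = {t \<otimes>\<^bsub>?K\<^esub> y i [^]\<^bsub>?K\<^esub> (k::int) | t k. t \<in> T i}" .
    then have "cyclic_group (?K Mod (T i))" by (rule group.cyc_quot[OF gK nT yK])
    then show ?thesis using nT by simp
  qed
  have rG: "grp_rank ?G = s" by (rule Zn_rank[OF N0 N2])
  have TU: "(\<Union>i<s. T i) \<subseteq> carrier ?G" using Tc by blast
  have genT: "generate ?G (conj_closure ?G (\<Union>i<s. T i)) = carrier ?G"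
  proof -
    have "generate ?G (\<Union>i<s. T i) = carrier ?G"
    proof (rule equalityI)
      show "generate ?G (\<Union>i<s. T i) \<subseteq> carrier ?G" using Gc.generate_in_carrier[OF TU] by blast
      have "ev N s ` {..<s} \<subseteq> (\<Union>i<s. T i)" using evT by blast
      then have "generate ?G (ev N s ` {..<s}) \<subseteq> generate ?G (\<Union>i<s. T i)" by (rule Gc.mono_generate)
      then show "carrier ?G \<subseteq> generate ?G (\<Union>i<s. T i)" using Zn_gen[OF N0] by blast
    qed
    then show ?thesis using conj_closure_comm[OF Zn_group TU] by simp
  qed
  have tdc: "tame_dec_config ?G T Z"
    unfolding tame_dec_config_def tame_ram_config_def rG
    using Gc.is_group Tsub Tcyc genT Zsub TZ Zq Zn_carrier[OF N0] by (simp add: finite_PiE)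
  have dq: "dec_quotient ?G T Z H S W"
    unfolding dec_quotient_def rG rH
    using hom surj \<pi>T \<pi>Z by blast
  show ?thesis using N0 tdc dq by blast
qed

lemma ram_to_dec:
  assumes cH: "comm_group H" and rc: "tame_ram_config H S"
  shows "tame_dec_config H S S"
proof -
  interpret comm_group H by (rule cH)
  have q: "normal (S i) (H\<lparr>carrier := S i\<rparr>) \<and> cyclic_group ((H\<lparr>carrier := S i\<rparr>) Mod (S i))"
    if Si: "subgroup (S i) H" for i
  proof -
    let ?K = "H\<lparr>carrier := S i\<rparr>"
    have gK: "group ?K" by (rule subgroup_imp_group[OF Si])
    have ScH: "S i \<subseteq> carrier H" by (rule subgroup.subset[OF Si])
    have cK: "comm_group ?K"
    proof (rule group.group_comm_groupI[OF gK])
      fix a b assume "a \<in> carrier ?K" "b \<in> carrier ?K"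
      then have "a \<in> carrier H" "b \<in> carrier H" using ScH by auto
      then show "a \<otimes>\<^bsub>?K\<^esub> b = b \<otimes>\<^bsub>?K\<^esub> a" using m_comm by simp
    qed
    have TK: "subgroup (S i) ?K" by (rule subgroup_incl[OF Si Si subset_refl])
    have nT: "normal (S i) ?K" by (rule comm_group.subgroup_imp_normal[OF cK TK])
    have oK: "\<one>\<^bsub>?K\<^esub> \<in> carrier ?K" by (rule monoid.one_closed[OF group.is_monoid[OF gK]])
    have eq: "t \<otimes>\<^bsub>?K\<^esub> \<one>\<^bsub>?K\<^esub> [^]\<^bsub>?K\<^esub> (k::int) = t" if "t \<in> S i" for t k
    proof -
      have "\<one>\<^bsub>?K\<^esub> [^]\<^bsub>?K\<^esub> k = \<one>\<^bsub>?K\<^esub>" by (rule group.int_pow_one[OF gK])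
      moreover have "t \<otimes>\<^bsub>?K\<^esub> \<one>\<^bsub>?K\<^esub> = t"
        using monoid.r_one[OF group.is_monoid[OF gK]] that by simp
      ultimately show ?thesis by simp
    qed
    have "carrier ?K = {t \<otimes>\<^bsub>?K\<^esub> \<one>\<^bsub>?K\<^esub> [^]\<^bsub>?K\<^esub> (k::int) | t k. t \<in> S i}"
    proof (rule equalityI; rule subsetI)
      fix x assume "x \<in> carrier ?K"
      then have x: "x \<in> S i" by simp
      then have "x = x \<otimes>\<^bsub>?K\<^esub> \<one>\<^bsub>?K\<^esub> [^]\<^bsub>?K\<^esub> (0::int)" using eq[of x 0] by simp
      then show "x \<in> {t \<otimes>\<^bsub>?K\<^esub> \<one>\<^bsub>?K\<^esub> [^]\<^bsub>?K\<^esub> (k::int) | t k. t \<in> S i}" using x by blast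
    next
      fix x assume "x \<in> {t \<otimes>\<^bsub>?K\<^esub> \<one>\<^bsub>?K\<^esub> [^]\<^bsub>?K\<^esub> (k::int) | t k. t \<in> S i}"
      then obtain t and k::int where "t \<in> S i" "x = t \<otimes>\<^bsub>?K\<^esub> \<one>\<^bsub>?K\<^esub> [^]\<^bsub>?K\<^esub> k" by blast
      then show "x \<in> carrier ?K" using eq by simp
    qed
    then have "cyclic_group (?K Mod (S i))" by (rule group.cyc_quot[OF gK nT oK])
    then show ?thesis using nT by simp
  qed
  have sg: "subgroup (S i) H" if "i < grp_rank H" for i
    using rc that unfolding tame_ram_config_def by simp
  show ?thesis
    unfolding tame_dec_config_def
  proof (intro conjI allI impI rc)
    fix i assume "i < grp_rank H"
    then have Si: "subgroup (S i) H" by (rule sg)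
    show "subgroup (S i) H" by (rule Si)
    show "S i \<subseteq> S i" by (rule subset_refl)
    show "normal (S i) (H\<lparr>carrier := S i\<rparr>)" using q[OF Si] by (rule conjunct1)
    show "cyclic_group ((H\<lparr>carrier := S i\<rparr>) Mod (S i))" using q[OF Si] by (rule conjunct2)
  qed
qed

theorem proposition3p1:
  fixes H :: "('a, 'b) monoid_scheme" and S W :: "nat \<Rightarrow> 'a set" and s :: nat
  assumes "comm_group H" and "finite (carrier H)" and "grp_rank H = s"
  shows "(tame_dec_config H S W \<longrightarrow>
            (\<exists>n>0. \<exists>T Z. tame_dec_config (Zn_power n s) T Z \<and>
                         dec_quotient (Zn_power n s) T Z H S W))
       \<and> (tame_ram_config H S \<longrightarrow>
            (\<exists>n>0. \<exists>T. tame_ram_config (Zn_power n s) T \<and>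
                       ram_quotient (Zn_power n s) T H S))"
proof (intro conjI impI)
  assume "tame_dec_config H S W"
  then show "\<exists>n>0. \<exists>T Z. tame_dec_config (Zn_power n s) T Z \<and> dec_quotient (Zn_power n s) T Z H S W"
    by (rule main_dec[OF assms])
next
  assume "tame_ram_config H S"
  then have d: "tame_dec_config H S S" by (rule ram_to_dec[OF assms(1)])
  have ex: "\<exists>n>0. \<exists>T Z. tame_dec_config (Zn_power n s) T Z \<and> dec_quotient (Zn_power n s) T Z H S S"
    by (rule main_dec[OF assms d])
  then obtain n where nn: "n > 0 \<and> (\<exists>T Z. tame_dec_config (Zn_power n s) T Z \<and> dec_quotient (Zn_power n s) T Z H S S)"
    by (rule exE)
  have n0: "n > 0" using nn by (rule conjunct1)
  from nn have "\<exists>T Z. tame_dec_config (Zn_power n s) T Z \<and> dec_quotient (Zn_power n s) T Z H S S"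
    by (rule conjunct2)
  then obtain T Z where n2: "tame_dec_config (Zn_power n s) T Z" and n3: "dec_quotient (Zn_power n s) T Z H S S"
    by (elim exE conjE)
  have r: "tame_ram_config (Zn_power n s) T" using n2 unfolding tame_dec_config_def by (rule conjunct1)
  have rk: "grp_rank H = grp_rank (Zn_power n s)" using n3 unfolding dec_quotient_def by (rule conjunct1)
  obtain \<pi> where p: "\<pi> \<in> hom (Zn_power n s) H" "\<pi> ` carrier (Zn_power n s) = carrier H"
      "\<forall>i < grp_rank (Zn_power n s). \<pi> ` T i = S i \<and> \<pi> ` Z i = S i"
    using n3 unfolding dec_quotient_def by (elim conjE exE)
  have "\<forall>i < grp_rank (Zn_power n s). \<pi> ` T i = S i" using p(3) by simp
  then have "ram_quotient (Zn_power n s) T H S"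
    unfolding ram_quotient_def using rk p(1,2) by (intro conjI exI[of _ \<pi>])
  then show "\<exists>n>0. \<exists>T. tame_ram_config (Zn_power n s) T \<and> ram_quotient (Zn_power n s) T H S"
    using n0 r by (intro exI[of _ n] conjI exI[of _ T])
qed

end
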